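(* Let $f,g:\mathbb{R}^n\to[0,+\infty)$ and $h_1,h_2:\mathbb{R}^n\to\mathbb{R}$, let $C\subseteq\mathbb{R}^n$ be closed and convex, $\Omega:=\{x:g(x)\neq0\}$, $C\cap\Omega\neq\emptyset$, and assume: $f$ is convex; $g$ is differentiable with locally Lipschitz gradient; $h_1$ is differentiable with locally Lipschitz gradient; $h_2$ is convex. Let $F$, $H$ and Algorithm 1 be as in the context, with $x^0\in\mathrm{dom}F$, and assume $\mathcal{X}_0:=\{x\in\mathrm{dom}F:F(x)\le F(x^0)\}$ is compact. Let $\{(x^k,z^k,c_k):k\in\mathbb{N}\}$ be generated by Algorithm 1. Then: (i) $\{(x^k,z^k,c_k):k\in\mathbb{N}\}$ is bounded; (ii) $\lim_{k\to\infty}F(x^k)$ exists; (iii) $\lim_{k\to\infty}\|x^{k+1}-x^k\|_2=0$.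
   Context: $F(x)=f^2(x)/g(x)+h_1(x)-h_2(x)$ if $x\in\Omega\cap C$, $F(x)=+\infty$ otherwise. $\iota_C$ is the indicator of $C$, $h_2^\star$ the convex conjugate of $h_2$, $\partial h_2$ the convex subdifferential, $\mathrm{prox}_\varphi(y)=\arg\min_x\{\varphi(x)+\frac12\|x-y\|_2^2\}$. $H(x,z,c)=2cf(x)+\iota_C(x)-c^2g(x)+h_1(x)+h_2^\star(z)-\langle x,z\rangle$. Algorithm 1: given $x^0\in\mathrm{dom}F$, $0<\underline{\alpha}<\overline{\alpha}$, $\sigma>0$, $0<r<1$, for $k=0,1,2,\dots$: (Step 1) compute $c_k=f(x^k)/g(x^k)$, choose $z^k\in\partial h_2(x^k)$, set $\alpha:=\widetilde{\alpha}_k\in[\underline{\alpha},\overline{\alpha}]$; (Step 2) compute $\widehat{x}^k\in\mathrm{prox}_{2\alpha c_kf+\iota_C}\big(x^k-\alpha(\nabla h_1(x^k)-c_k^2\nabla g(x^k)-z^k)\big)$; if $\widehat{x}^k\in\Omega$ and $H(\widehat{x}^k,z^k,f(\widehat{x}^k)/g(\widehat{x}^k))+\frac{\sigma}{2}\|\widehat{x}^k-x^k\|_2^2\le F(x^k)$, set $x^{k+1}=\widehat{x}^k$, $\alpha_k:=\alpha$ and go to the next $k$; otherwise set $\alpha:=r\alpha$ and repeat Step 2. *)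

theory Defs
  imports "HOL-Analysis.Analysis" "HOL-Library.Extended_Real"
begin

definition Omega :: "('a \<Rightarrow> real) \<Rightarrow> 'a set" where
  "Omega g = {x. g x \<noteq> 0}"

definition Fobj :: "('a \<Rightarrow> real) \<Rightarrow> ('a \<Rightarrow> real) \<Rightarrow> ('a \<Rightarrow> real) \<Rightarrow> ('a \<Rightarrow> real)
    \<Rightarrow> 'a set \<Rightarrow> 'a \<Rightarrow> ereal" where
  "Fobj f g h1 h2 C x =
     (if x \<in> Omega g \<inter> C then ereal ((f x)\<^sup>2 / g x + h1 x - h2 x) else \<infinity>)"

definition domF :: "('a \<Rightarrow> real) \<Rightarrow> ('a \<Rightarrow> real) \<Rightarrow> ('a \<Rightarrow> real) \<Rightarrow> ('a \<Rightarrow> real)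
    \<Rightarrow> 'a set \<Rightarrow> 'a set" where
  "domF f g h1 h2 C = {x. Fobj f g h1 h2 C x < \<infinity>}"

definition indicator_ereal :: "'a set \<Rightarrow> 'a \<Rightarrow> ereal" where
  "indicator_ereal C x = (if x \<in> C then 0 else \<infinity>)"

definition conjugate :: "('a::real_inner \<Rightarrow> real) \<Rightarrow> 'a \<Rightarrow> ereal" where
  "conjugate h z = (SUP x. ereal (inner x z - h x))"

definition subdiff :: "('a::real_inner \<Rightarrow> real) \<Rightarrow> 'a \<Rightarrow> 'a set" where
  "subdiff h x = {z. \<forall>y. h y \<ge> h x + inner z (y - x)}"

definition prox :: "('a::real_normed_vector \<Rightarrow> ereal) \<Rightarrow> 'a \<Rightarrow> 'a set" where
  "prox \<phi> y = {x. \<forall>u. \<phi> x + ereal ((norm (x - y))\<^sup>2 / 2) \<le> \<phi> u + ereal ((norm (u - y))\<^sup>2 / 2)}"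

definition Hfun :: "('a::real_inner \<Rightarrow> real) \<Rightarrow> ('a \<Rightarrow> real) \<Rightarrow> ('a \<Rightarrow> real) \<Rightarrow> ('a \<Rightarrow> real)
    \<Rightarrow> 'a set \<Rightarrow> 'a \<Rightarrow> 'a \<Rightarrow> real \<Rightarrow> ereal" where
  "Hfun f g h1 h2 C x z c =
     ereal (2 * c * f x) + indicator_ereal C x + ereal (- (c\<^sup>2 * g x)) + ereal (h1 x)
     + conjugate h2 z + ereal (- inner x z)"

text \<open>Acceptance test of the line search in Step 2 of Algorithm 1.\<close>
definition accept :: "('a::real_inner \<Rightarrow> real) \<Rightarrow> ('a \<Rightarrow> real) \<Rightarrow> ('a \<Rightarrow> real) \<Rightarrow> ('a \<Rightarrow> real)
    \<Rightarrow> 'a set \<Rightarrow> real \<Rightarrow> 'a \<Rightarrow> 'a \<Rightarrow> 'a \<Rightarrow> bool" where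
  "accept f g h1 h2 C \<sigma> xk zk xh \<longleftrightarrow>
     xh \<in> Omega g \<and>
     Hfun f g h1 h2 C xh zk (f xh / g xh) + ereal (\<sigma> / 2 * (norm (xh - xk))\<^sup>2)
       \<le> Fobj f g h1 h2 C xk"

definition trial :: "('a::real_inner \<Rightarrow> real) \<Rightarrow> 'a set \<Rightarrow> ('a \<Rightarrow> 'a) \<Rightarrow> ('a \<Rightarrow> 'a)
    \<Rightarrow> real \<Rightarrow> 'a \<Rightarrow> 'a \<Rightarrow> real \<Rightarrow> 'a set" where
  "trial f C gh1 gg c xk zk \<alpha> =
     prox (\<lambda>x. ereal (2 * \<alpha> * c * f x) + indicator_ereal C x)
          (xk - \<alpha> *\<^sub>R (gh1 xk - c\<^sup>2 *\<^sub>R gg xk - zk))"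

definition loc_lipschitz :: "('a::metric_space \<Rightarrow> 'b::metric_space) \<Rightarrow> bool" where
  "loc_lipschitz G \<longleftrightarrow> (\<forall>x. \<exists>e>0. \<exists>L. \<forall>y\<in>ball x e. \<forall>y'\<in>ball x e. dist (G y) (G y') \<le> L * dist y y')"

end

theory Submission imports Defs begin

lemma step_lemma:
  fixes f g hA hB :: "'a::real_inner \<Rightarrow> real"
  assumes g_nonneg: "\<And>x. g x \<ge> 0"
    and acc: "accept f g hA hB C \<sigma> xk zk xh"
    and Fk: "Fobj f g hA hB C xk = ereal a"
  shows "xh \<in> Omega g \<inter> C \<and>
    (f xh)\<^sup>2 / g xh + hA xh - hB xh + \<sigma> / 2 * (norm (xh - xk))\<^sup>2 \<le> a"
proof -
  have om: "xh \<in> Omega g" and le: "Hfun f g hA hB C xh zk (f xh / g xh) + ereal (\<sigma> / 2 * (norm (xh - xk))\<^sup>2) \<le> ereal a"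
    using acc Fk unfolding accept_def by auto
  have gpos: "g xh \<noteq> 0" using om by (simp add: Omega_def)
  have conj: "ereal (inner xh zk - hB xh) \<le> conjugate hB zk"
    unfolding conjugate_def by (rule SUP_upper2[of xh]) (auto simp: inner_commute)
  define cc where "cc = f xh / g xh"
  have cc: "2 * cc * f xh - cc\<^sup>2 * g xh = (f xh)\<^sup>2 / g xh"
    using gpos unfolding cc_def by (simp add: field_simps power2_eq_square)
  show ?thesis
  proof (cases "xh \<in> C")
    case False
    then have "indicator_ereal C xh = \<infinity>" by (simp add: indicator_ereal_def)
    moreover have "conjugate hB zk \<noteq> -\<infinity>" using conj by auto
    ultimately have "Hfun f g hA hB C xh zk (f xh / g xh) = \<infinity>"
      unfolding Hfun_def by simp
    then show ?thesis using le by simp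
  next
    case True
    then have ind: "indicator_ereal C xh = 0" by (simp add: indicator_ereal_def)
    show ?thesis
    proof (cases "conjugate hB zk")
      case (real t)
      have "t \<ge> inner xh zk - hB xh" using conj real by simp
      moreover have "2 * cc * f xh + - (cc\<^sup>2 * g xh) + hA xh + t + - inner xh zk + \<sigma> / 2 * (norm (xh - xk))\<^sup>2 \<le> a"
        using le real ind unfolding Hfun_def cc_def[symmetric] by simp
      ultimately show ?thesis using cc om True by simp
    next
      case PInf
      then show ?thesis using le ind unfolding Hfun_def by simp
    next
      case MInf
      then show ?thesis using conj by simp
    qed
  qed
qed

lemma subgrad_bound:
  fixes h :: "'a::euclidean_space \<Rightarrow> real"
  assumes "continuous_on UNIV h"
  shows "\<exists>B. \<forall>x z. norm x \<le> R \<longrightarrow> z \<in> subdiff h x \<longrightarrow> norm z \<le> B"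
proof -
  have "compact (h ` cball 0 (R+1))"
    by (rule compact_continuous_image) (auto intro: continuous_on_subset[OF assms])
  then obtain K where K: "\<And>y. y \<in> cball 0 (R+1) \<Longrightarrow> norm (h y) \<le> K"
    using compact_imp_bounded bounded_iff by (metis image_eqI)
  have "norm z \<le> 2 * K" if "norm x \<le> R" "z \<in> subdiff h x" for x z
  proof (cases "z = 0")
    case True
    have "0 \<le> norm (h x)" by simp
    also have "\<dots> \<le> K" using K that(1) by auto
    finally show ?thesis using True by simp
  next
    case False
    define y where "y = x + (1 / norm z) *\<^sub>R z"
    have "norm y \<le> norm x + norm ((1 / norm z) *\<^sub>R z)" unfolding y_def by (rule norm_triangle_ineq)
    also have "\<dots> = norm x + 1" using False by simp
    finally have ny: "norm y \<le> R + 1" using that(1) by simp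
    have "h y \<ge> h x + inner z (y - x)" using that(2) by (simp add: subdiff_def)
    moreover have "inner z (y - x) = norm z" using False
      by (simp add: y_def power2_norm_eq_inner[symmetric] power2_eq_square)
    moreover have "norm (h y) \<le> K" using K ny by auto
    moreover have "norm (h x) \<le> K" using K that(1) by auto
    ultimately show ?thesis by simp
  qed
  then show ?thesis by blast
qed

theorem corollary4p1:
  fixes f g h1 h2 :: "real ^ 'n \<Rightarrow> real"
    and gg gh1 :: "real ^ 'n \<Rightarrow> real ^ 'n"
    and C :: "(real ^ 'n) set"
    and \<alpha>l \<alpha>h \<sigma> r :: real
    and x z :: "nat \<Rightarrow> real ^ 'n"
    and c :: "nat \<Rightarrow> real"
    and \<alpha>t :: "nat \<Rightarrow> real" and j :: "nat \<Rightarrow> nat"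
  assumes f_nonneg: "\<And>x. f x \<ge> 0"
    and g_nonneg: "\<And>x. g x \<ge> 0"
    and C_closed: "closed C" and C_convex: "convex C"
    and C_Omega: "C \<inter> Omega g \<noteq> {}"
    and f_convex: "convex_on UNIV f"
    and g_grad: "\<And>x. (g has_derivative (\<lambda>v. inner (gg x) v)) (at x)"
    and gg_lip: "loc_lipschitz gg"
    and h1_grad: "\<And>x. (h1 has_derivative (\<lambda>v. inner (gh1 x) v)) (at x)"
    and gh1_lip: "loc_lipschitz gh1"
    and h2_convex: "convex_on UNIV h2"
    and params: "0 < \<alpha>l" "\<alpha>l < \<alpha>h" "\<sigma> > 0" "0 < r" "r < 1"
    and x0: "x 0 \<in> domF f g h1 h2 C"
    and X0_compact: "compact {y \<in> domF f g h1 h2 C. Fobj f g h1 h2 C y \<le> Fobj f g h1 h2 C (x 0)}"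
    and step1_c: "\<And>k. c k = f (x k) / g (x k)"
    and step1_z: "\<And>k. z k \<in> subdiff h2 (x k)"
    and step1_alpha: "\<And>k. \<alpha>l \<le> \<alpha>t k \<and> \<alpha>t k \<le> \<alpha>h"
    and step2_accept: "\<And>k. x (Suc k) \<in> trial f C gh1 gg (c k) (x k) (z k) (\<alpha>t k * r ^ j k)
                           \<and> accept f g h1 h2 C \<sigma> (x k) (z k) (x (Suc k))"
    and step2_reject: "\<And>k i. i < j k \<Longrightarrow>
            \<exists>xh \<in> trial f C gh1 gg (c k) (x k) (z k) (\<alpha>t k * r ^ i).
               \<not> accept f g h1 h2 C \<sigma> (x k) (z k) xh"
  shows "bounded (range (\<lambda>k. (x k, z k, c k)))
         \<and> (\<exists>L::real. (\<lambda>k. Fobj f g h1 h2 C (x k)) \<longlonglongrightarrow> ereal L)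
         \<and> (\<lambda>k. norm (x (Suc k) - x k)) \<longlonglongrightarrow> 0"
proof -
  define F where "F = Fobj f g h1 h2 C"
  define X0 where "X0 = {y \<in> domF f g h1 h2 C. Fobj f g h1 h2 C y \<le> Fobj f g h1 h2 C (x 0)}"
  define a where "a k = (f (x k))\<^sup>2 / g (x k) + h1 (x k) - h2 (x k)" for k
  define d where "d k = norm (x (Suc k) - x k)" for k
  have gcont: "continuous_on UNIV g"
    by (intro continuous_at_imp_continuous_on ballI has_derivative_continuous[OF g_grad])
  have h1cont: "continuous_on UNIV h1"
    by (intro continuous_at_imp_continuous_on ballI has_derivative_continuous[OF h1_grad])
  have h2cont: "continuous_on UNIV h2" by (rule convex_on_continuous) (auto simp: h2_convex)
  have fcont: "continuous_on UNIV f" by (rule convex_on_continuous) (auto simp: f_convex)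
  have X0c: "compact X0" using X0_compact unfolding X0_def .
  have inv: "x k \<in> Omega g \<inter> C \<and> F (x k) = ereal (a k)" for k
  proof (induction k)
    case 0
    have "x 0 \<in> Omega g \<inter> C"
      using x0 by (auto simp: domF_def Fobj_def split: if_splits)
    then show ?case by (simp add: F_def Fobj_def a_def)
  next
    case (Suc k)
    from step_lemma[where g=g and f=f and hA=h1 and hB=h2 and C=C and \<sigma>=\<sigma> and xk="x k" and zk="z k" and xh="x (Suc k)" and a="a k", OF g_nonneg]
    have "x (Suc k) \<in> Omega g \<inter> C" using Suc step2_accept unfolding F_def by blast
    then show ?case by (simp add: F_def Fobj_def a_def)
  qed
  have dec: "a (Suc k) + \<sigma> / 2 * (d k)\<^sup>2 \<le> a k" for k
    using step_lemma[where g=g and f=f and hA=h1 and hB=h2 and C=C and \<sigma>=\<sigma> and xk="x k" and zk="z k" and xh="x (Suc k)" and a="a k", OF g_nonneg]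
      inv[of k] step2_accept[of k] unfolding F_def a_def d_def by blast
  have dec1: "a (Suc k) \<le> a k" for k
  proof -
    have "0 \<le> \<sigma> / 2 * (d k)\<^sup>2" using params(3) by simp
    then show ?thesis using dec[of k] by linarith
  qed
  have decs: "decseq a" using dec1 by (simp add: decseq_SucI)
  have a0: "a k \<le> a 0" for k using decs by (simp add: decseq_def)
  have inX0: "x k \<in> X0" for k
    using inv[of k] inv[of 0] a0[of k] unfolding X0_def domF_def F_def by auto
  have x0X0: "x 0 \<in> X0" by (rule inX0)
  have "compact ((\<lambda>y. h1 y - h2 y) ` X0)"
    by (rule compact_continuous_image[OF _ X0c])
       (auto intro!: continuous_intros intro: continuous_on_subset[OF h1cont] continuous_on_subset[OF h2cont])
  then obtain B where "\<forall>v\<in>(\<lambda>y. h1 y - h2 y) ` X0. norm v \<le> B"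
    using compact_imp_bounded bounded_iff by blast
  then have B: "\<And>y. y \<in> X0 \<Longrightarrow> norm (h1 y - h2 y) \<le> B" by blast
  have alow: "- B \<le> a k" for k
  proof -
    have "0 \<le> (f (x k))\<^sup>2 / g (x k)" using g_nonneg by simp
    moreover have "norm (h1 (x k) - h2 (x k)) \<le> B" using B inX0 by blast
    ultimately show ?thesis unfolding a_def by simp
  qed
  obtain L where L: "a \<longlonglongrightarrow> L" using decseq_convergent[OF decs, of "-B"] alow by blast
  have ii: "\<exists>L::real. (\<lambda>k. Fobj f g h1 h2 C (x k)) \<longlonglongrightarrow> ereal L"
    using inv L unfolding F_def by (intro exI[of _ L]) simp
  have d2: "(\<lambda>k. (d k)\<^sup>2) \<longlonglongrightarrow> 0"
  proof (rule tendsto_sandwich[of "\<lambda>_. 0" _ _ "\<lambda>k. 2 / \<sigma> * (a k - a (Suc k))"])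
    show "\<forall>\<^sub>F k in sequentially. 0 \<le> (d k)\<^sup>2" by simp
    show "\<forall>\<^sub>F k in sequentially. (d k)\<^sup>2 \<le> 2 / \<sigma> * (a k - a (Suc k))"
    proof (rule always_eventually, rule allI)
      fix k
      have "\<sigma> * (d k)\<^sup>2 \<le> 2 * (a k - a (Suc k))" using dec[of k] by simp
      then show "(d k)\<^sup>2 \<le> 2 / \<sigma> * (a k - a (Suc k))" using params(3)
        by (simp add: field_simps)
    qed
    show "(\<lambda>_. 0) \<longlonglongrightarrow> (0::real)" by simp
    have "(\<lambda>k. 2 / \<sigma> * (a k - a (Suc k))) \<longlonglongrightarrow> 2 / \<sigma> * (L - L)"
      by (intro tendsto_intros L LIMSEQ_Suc)
    then show "(\<lambda>k. 2 / \<sigma> * (a k - a (Suc k))) \<longlonglongrightarrow> 0" by simp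
  qed
  have iii: "(\<lambda>k. norm (x (Suc k) - x k)) \<longlonglongrightarrow> 0"
  proof -
    have "(\<lambda>k. sqrt ((d k)\<^sup>2)) \<longlonglongrightarrow> sqrt 0" by (intro tendsto_intros d2)
    then show ?thesis by (simp add: d_def)
  qed
  have bx: "bounded (range x)"
    using compact_imp_bounded[OF X0c] inX0 by (meson bounded_subset image_subsetI)
  then obtain R where R: "\<And>k. norm (x k) \<le> R" by (auto simp: bounded_iff)
  obtain Bz where Bz: "\<And>k. norm (z k) \<le> Bz"
    using subgrad_bound[OF h2cont, of R] R step1_z by blast
  have bz: "bounded (range z)" using Bz by (auto simp: bounded_iff)
  obtain xm where xm: "xm \<in> X0" "\<And>y. y \<in> X0 \<Longrightarrow> g xm \<le> g y"
    using continuous_attains_inf[OF X0c _ continuous_on_subset[OF gcont]] x0X0 by blast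
  have "xm \<in> Omega g" using xm(1) unfolding X0_def domF_def Fobj_def by (auto split: if_splits)
  then have gm: "g xm > 0" using g_nonneg[of xm] by (simp add: Omega_def)
  have "compact (f ` X0)"
    by (rule compact_continuous_image[OF continuous_on_subset[OF fcont] X0c]) simp
  then obtain M where "\<forall>v\<in>f ` X0. norm v \<le> M"
    using compact_imp_bounded bounded_iff by blast
  then have M: "\<And>y. y \<in> X0 \<Longrightarrow> norm (f y) \<le> M" by blast
  have "norm (c k) \<le> M / g xm" for k
  proof -
    have gk: "g xm \<le> g (x k)" using xm inX0 by blast
    have fk: "0 \<le> f (x k)" "f (x k) \<le> M" using f_nonneg M[OF inX0[of k]] by auto
    have "c k = f (x k) / g (x k)" by (rule step1_c)
    also have "\<dots> \<le> f (x k) / g xm" using gk gm fk by (intro divide_left_mono) auto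
    also have "\<dots> \<le> M / g xm" using fk gm by (intro divide_right_mono) auto
    finally show ?thesis using fk gm gk by (simp add: step1_c)
  qed
  then have bc: "bounded (range c)" by (auto simp: bounded_iff)
  have "range (\<lambda>k. (x k, z k, c k)) \<subseteq> range x \<times> (range z \<times> range c)" by auto
  then have i: "bounded (range (\<lambda>k. (x k, z k, c k)))"
    using bounded_Times[OF bx bounded_Times[OF bz bc]] bounded_subset by blast
  show ?thesis using i ii iii by blast
qed

end
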